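(* Let $A\in\mathrm{GL}_{n}(\mathbb{Z})$ and let $G=\mathbb{Z}^{n}\rtimes_{A}\mathbb{Z}$, where a generator of $\mathbb{Z}$ acts on $\mathbb{Z}^{n}$ via $A$. Let $l:G\to[0,\infty)$ be a length function. Then the restriction of $l$ to $\mathbb{Z}^{n}$ extends to a continuous function $l:\mathbb{R}^{n}\to[0,\infty)$ satisfying: (1) $l(r_{1}+r_{2})\leq l(r_{1})+l(r_{2})$ for all $r_{1},r_{2}\in\mathbb{R}^{n}$; (2) $l(ar)=|a|\,l(r)$ for all $a\in\mathbb{R}$, $r\in\mathbb{R}^{n}$; (3) $l(Ar)=l(r)$ for all $r\in\mathbb{R}^{n}$.
   Context: A length function on a group $G$ is a function $l:G\to[0,\infty)$ such that $l(g^{n})=|n|\,l(g)$ for all $g\in G,n\in\mathbb{Z}$; $l(hgh^{-1})=l(g)$ for all $g,h$; and $l(ab)\leq l(a)+l(b)$ whenever $a,b$ commute. *)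

theory Defs
  imports "HOL-Analysis.Analysis" "HOL-Algebra.Group"
begin

text \<open>Integer powers A^k (k in Z) of a matrix A in GL_n(Z); for k < 0 the power of the
  (integer) inverse matrix is used.\<close>
definition mat_ipow :: "int^'n^'n \<Rightarrow> int \<Rightarrow> int^'n^'n" where
  "mat_ipow A k =
     (if 0 \<le> k then (((**) A) ^^ nat k) (mat 1)
      else (((**) (matrix_inv A)) ^^ nat (- k)) (mat 1))"

text \<open>The semidirect product Z^n \<rtimes>_A Z: (v,k)(w,m) = (v + A^k w, k + m),
  so that the generator t = (0,1) of Z acts by t v t^-1 = A v.\<close>
definition sdp :: "int^'n^'n \<Rightarrow> ((int^'n) \<times> int) monoid" where
  "sdp A = \<lparr> carrier = UNIV,
             mult = (\<lambda>(v, k) (w, m). (v + mat_ipow A k *v w, k + m)),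
             one = (0, 0) \<rparr>"

text \<open>Length function on a group G (with values in [0,\<infinity>)).\<close>
definition length_function :: "('a, 'b) monoid_scheme \<Rightarrow> ('a \<Rightarrow> real) \<Rightarrow> bool" where
  "length_function G l \<longleftrightarrow>
     (\<forall>g\<in>carrier G. 0 \<le> l g) \<and>
     (\<forall>g\<in>carrier G. \<forall>n::int. l (g [^]\<^bsub>G\<^esub> n) = \<bar>real_of_int n\<bar> * l g) \<and>
     (\<forall>g\<in>carrier G. \<forall>h\<in>carrier G.
        l (h \<otimes>\<^bsub>G\<^esub> g \<otimes>\<^bsub>G\<^esub> inv\<^bsub>G\<^esub> h) = l g) \<and>
     (\<forall>a\<in>carrier G. \<forall>b\<in>carrier G.
        a \<otimes>\<^bsub>G\<^esub> b = b \<otimes>\<^bsub>G\<^esub> a \<longrightarrow> l (a \<otimes>\<^bsub>G\<^esub> b) \<le> l a + l b)"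

definition real_vec :: "int^'n \<Rightarrow> real^'n" where
  "real_vec v = (\<chi> i. real_of_int (v $ i))"

definition real_mat :: "int^'n^'n \<Rightarrow> real^'n^'n" where
  "real_mat A = (\<chi> i j. real_of_int (A $ i $ j))"

end

theory Submission
  imports Defs
begin


lemma sdp_mult: "(v,k) \<otimes>\<^bsub>sdp A\<^esub> (w,m) = (v + mat_ipow A k *v w, k+m)"
  by (simp add: sdp_def)
lemma sdp_one: "\<one>\<^bsub>sdp A\<^esub> = (0,0)" by (simp add: sdp_def)
lemma sdp_carrier: "carrier (sdp A) = UNIV" by (simp add: sdp_def)

lemma mat_ipow0: "mat_ipow A 0 = mat 1" by (simp add: mat_ipow_def)
lemma mat_ipow1: "mat_ipow A 1 = A" by (simp add: mat_ipow_def matrix_mul_rid)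

lemma sdp_inv0: "inv\<^bsub>sdp A\<^esub> (v,0) = (-v,0)"
  unfolding m_inv_def
  apply (rule the_equality)
   apply (auto simp: sdp_mult sdp_one sdp_carrier mat_ipow0)
  apply (metis minus_unique)
  done

lemma sdp_inv1: assumes "invertible A" shows "inv\<^bsub>sdp A\<^esub> (0,1) = (0,-1)"
  unfolding m_inv_def
proof (rule the_equality)
  show "(0, -1) \<in> carrier (sdp A) \<and> (0, 1) \<otimes>\<^bsub>sdp A\<^esub> (0, -1) = \<one>\<^bsub>sdp A\<^esub> \<and> (0, -1) \<otimes>\<^bsub>sdp A\<^esub> (0, 1) = \<one>\<^bsub>sdp A\<^esub>"
    by (simp add: sdp_mult sdp_one sdp_carrier)
  fix y assume y: "y \<in> carrier (sdp A) \<and> (0, 1) \<otimes>\<^bsub>sdp A\<^esub> y = \<one>\<^bsub>sdp A\<^esub> \<and> y \<otimes>\<^bsub>sdp A\<^esub> (0, 1) = \<one>\<^bsub>sdp A\<^esub>"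
  obtain w m where yy: "y = (w,m)" by force
  from y have "A *v w = 0" "m = -1" by (auto simp: yy sdp_mult sdp_one mat_ipow1)
  moreover obtain B where "B ** A = mat 1" using assms unfolding invertible_def by blast
  ultimately have "w = 0"
    by (metis matrix_vector_mul_assoc matrix_vector_mul_lid matrix_vector_mult_0_right)
  then show "y = (0,-1)" using yy \<open>m = -1\<close> by simp
qed

lemma sdp_natpow: "(v,0) [^]\<^bsub>sdp A\<^esub> (n::nat) = (of_nat n *s v, 0)"
  by (induction n) (auto simp: nat_pow_def sdp_mult sdp_one mat_ipow0 vec_eq_iff algebra_simps)

lemma sdp_intpow: "(v,0) [^]\<^bsub>sdp A\<^esub> (k::int) = (k *s v, 0)"
  by (auto simp: int_pow_def2 sdp_natpow sdp_inv0 vec_eq_iff)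



lemma fl_bounds: "real_of_int \<lfloor>x::real\<rfloor> \<le> x \<and> x < real_of_int \<lfloor>x\<rfloor> + 1"
  by linarith

lemma floor_add_le1: "\<bar>real_of_int \<lfloor>(x::real) + y\<rfloor> - (real_of_int \<lfloor>x\<rfloor> + real_of_int \<lfloor>y\<rfloor>)\<bar> \<le> 1"
proof -
  have "\<lfloor>x + y\<rfloor> - (\<lfloor>x\<rfloor> + \<lfloor>y\<rfloor>) \<in> {0, 1}" by (simp add: floor_add)
  then show ?thesis by (auto simp flip: of_int_add of_int_diff)
qed

lemma floor_neg_le1: "\<bar>real_of_int \<lfloor>- (x::real)\<rfloor> + real_of_int \<lfloor>x\<rfloor>\<bar> \<le> 1"
proof -
  have a: "real_of_int (\<lfloor>- x\<rfloor> + \<lfloor>x\<rfloor>) > -2" "real_of_int (\<lfloor>- x\<rfloor> + \<lfloor>x\<rfloor>) \<le> 0"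
    using fl_bounds[of x] fl_bounds[of "-x"] by linarith+
  have "\<lfloor>- x\<rfloor> + \<lfloor>x\<rfloor> > -2" "\<lfloor>- x\<rfloor> + \<lfloor>x\<rfloor> \<le> 0"
    using a by linarith+
  then have "\<lfloor>- x\<rfloor> + \<lfloor>x\<rfloor> \<in> {-1, 0}" by auto
  then show ?thesis by (auto simp flip: of_int_add)
qed

locale semin =
  fixes g :: "int^'n \<Rightarrow> real" and A :: "int^'n^'n"
  assumes nonneg: "\<And>v. 0 \<le> g v"
    and subadd: "\<And>v w. g (v + w) \<le> g v + g w"
    and homog: "\<And>k v. g (k *s v) = \<bar>real_of_int k\<bar> * g v"
    and ainv: "\<And>v. g (A *v v) = g v"
begin

definition "C = (\<Sum>i\<in>UNIV. g (axis i 1))"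
definition flr :: "real^'n \<Rightarrow> int^'n" where "flr r = (\<chi> i. \<lfloor>r$i\<rfloor>)"
definition "a k r = g (flr (real k *\<^sub>R r)) / real k"

lemma C_nonneg: "0 \<le> C" unfolding C_def by (simp add: nonneg sum_nonneg)

lemma g0: "g 0 = 0"
  using homog[of 0 0] by simp

lemma gneg: "g (- v) = g v"
proof -
  have "(-1::int) *s v = - v" by (simp add: vec_eq_iff)
  then show ?thesis using homog[of "-1" v] by simp
qed

lemma gsum: "finite S \<Longrightarrow> g (sum f S) \<le> (\<Sum>x\<in>S. g (f x))"
proof (induction S rule: finite_induct)
  case empty then show ?case by (simp add: g0)
next
  case (insert x F)
  then show ?case using subadd[of "f x" "sum f F"] by simp
qed

lemma gbound:
  assumes "\<And>i. real_of_int \<bar>v$i\<bar> \<le> B"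
  shows "g v \<le> C * B"
proof -
  have v: "v = (\<Sum>i\<in>UNIV. (v$i) *s axis i 1)"
    by (simp add: vec_eq_iff axis_def if_distrib cong: if_cong)
  have "g v \<le> (\<Sum>i\<in>UNIV. g ((v$i) *s axis i 1))"
    by (subst v) (rule gsum, simp)
  also have "\<dots> = (\<Sum>i\<in>UNIV. real_of_int \<bar>v$i\<bar> * g (axis i 1))"
    by (simp add: homog)
  also have "\<dots> \<le> (\<Sum>i\<in>UNIV. B * g (axis i 1))"
    by (rule sum_mono, rule mult_right_mono, use assms nonneg in auto)
  also have "\<dots> = C * B" by (simp add: C_def sum_distrib_left mult.commute)
  finally show ?thesis .
qed

lemma gdiff:
  assumes "\<And>i. \<bar>real_of_int (u$i) - real_of_int (w$i)\<bar> \<le> B"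
  shows "\<bar>g u - g w\<bar> \<le> C * B"
proof -
  have b: "g (u - w) \<le> C * B" by (rule gbound) (use assms in auto)
  have "g u \<le> g w + g (u - w)" using subadd[of w "u - w"] by simp
  moreover have "g w \<le> g u + g (u - w)" using subadd[of u "w - u"] gneg[of "u - w"] by simp
  ultimately show ?thesis using b by linarith
qed

lemma flr_nth[simp]: "flr r $ i = \<lfloor>r$i\<rfloor>" by (simp add: flr_def)

lemma cauchy_bound:
  assumes "k \<ge> 1" "m \<ge> 1"
  shows "\<bar>a m r - a k r\<bar> \<le> C / m + C / k"
proof -
  have "\<bar>g (int k *s flr (real m *\<^sub>R r)) - g (int m *s flr (real k *\<^sub>R r))\<bar> \<le> C * (real k + real m)"
  proof (rule gdiff)
    fix i
    let ?x = "r$i"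
    have f1: "real_of_int \<lfloor>real m * ?x\<rfloor> \<le> real m * ?x" "real m * ?x < real_of_int \<lfloor>real m * ?x\<rfloor> + 1"
      by linarith+
    have f2: "real_of_int \<lfloor>real k * ?x\<rfloor> \<le> real k * ?x" "real k * ?x < real_of_int \<lfloor>real k * ?x\<rfloor> + 1"
      by linarith+
    have e1: "real k * real_of_int \<lfloor>real m * ?x\<rfloor> \<le> real k * (real m * ?x)"
      "real k * (real m * ?x) \<le> real k * real_of_int \<lfloor>real m * ?x\<rfloor> + real k"
      using mult_left_mono[OF f1(1), of "real k"] mult_left_mono[OF less_imp_le[OF f1(2)], of "real k"]
      by (auto simp: algebra_simps)
    have e2: "real m * real_of_int \<lfloor>real k * ?x\<rfloor> \<le> real m * (real k * ?x)"
      "real m * (real k * ?x) \<le> real m * real_of_int \<lfloor>real k * ?x\<rfloor> + real m"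
      using mult_left_mono[OF f2(1), of "real m"] mult_left_mono[OF less_imp_le[OF f2(2)], of "real m"]
      by (auto simp: algebra_simps)
    show "\<bar>real_of_int ((int k *s flr (real m *\<^sub>R r)) $ i) - real_of_int ((int m *s flr (real k *\<^sub>R r)) $ i)\<bar>
          \<le> real k + real m"
      using e1 e2 by (simp add: algebra_simps abs_le_iff)
  qed
  then have "\<bar>real k * g (flr (real m *\<^sub>R r)) - real m * g (flr (real k *\<^sub>R r))\<bar> \<le> C * (real k + real m)"
    by (simp add: homog)
  then have "\<bar>real k * g (flr (real m *\<^sub>R r)) - real m * g (flr (real k *\<^sub>R r))\<bar> / (real k * real m) \<le> C * (real k + real m) / (real k * real m)"
    using assms by (intro divide_right_mono) auto
  moreover have "\<bar>real k * g (flr (real m *\<^sub>R r)) - real m * g (flr (real k *\<^sub>R r))\<bar> / (real k * real m) = \<bar>a m r - a k r\<bar>"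
    using assms by (simp add: a_def field_simps abs_div_pos[symmetric] flip: abs_mult)
  moreover have "C * (real k + real m) / (real k * real m) = C / m + C / k"
    using assms by (simp add: field_simps)
  ultimately show ?thesis by simp
qed


lemma a_Cauchy: "Cauchy (\<lambda>k. a k r)"
proof (rule metric_CauchyI)
  fix e :: real assume e: "0 < e"
  obtain M :: nat where M: "real M > 2 * C / e" using reals_Archimedean2 by blast
  have "2 * C / e \<ge> 0" using C_nonneg e by simp
  then have "real M > 0" using M by linarith
  then have M1: "M \<ge> 1" by simp
  have "C / real M < e / 2" using M e M1 by (simp add: field_simps)
  show "\<exists>M. \<forall>m\<ge>M. \<forall>n\<ge>M. dist (a m r) (a n r) < e"
  proof (intro exI allI impI)
    fix m n assume "M \<le> m" "M \<le> n"
    then have "C / m \<le> C / M" "C / n \<le> C / M" using M1 C_nonneg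
      by (auto intro!: divide_left_mono)
    moreover have "\<bar>a m r - a n r\<bar> \<le> C / m + C / n"
      using cauchy_bound[of n m r] \<open>M \<le> m\<close> \<open>M \<le> n\<close> M1 by simp
    ultimately show "dist (a m r) (a n r) < e"
      unfolding dist_real_def using \<open>C / real M < e / 2\<close> by linarith
  qed
qed

definition "L r = lim (\<lambda>k. a k r)"

lemma a_lim: "(\<lambda>k. a k r) \<longlonglongrightarrow> L r"
  unfolding L_def using a_Cauchy Cauchy_convergent_iff convergent_LIMSEQ_iff by blast

lemma L_bound: assumes "k \<ge> 1" shows "\<bar>a k r - L r\<bar> \<le> C / k"
proof (rule LIMSEQ_le)
  show "(\<lambda>j. \<bar>a k r - a j r\<bar>) \<longlonglongrightarrow> \<bar>a k r - L r\<bar>"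
    by (intro tendsto_intros a_lim)
  have "(\<lambda>j. C / real j) \<longlonglongrightarrow> 0"
    by (rule lim_const_over_n)
  then show "(\<lambda>j. C / k + C / real j) \<longlonglongrightarrow> C / k"
    using tendsto_add[OF tendsto_const, of _ 0 sequentially "C/k"] by simp
  show "\<exists>N. \<forall>j\<ge>N. \<bar>a k r - a j r\<bar> \<le> C / k + C / real j"
    using cauchy_bound[of j k r for j] assms
    by (intro exI[of _ 1]) (auto simp: abs_minus_commute)
qed

lemma squeeze_le:
  fixes x y D :: real
  assumes "\<And>k. (k::nat) \<ge> 1 \<Longrightarrow> x \<le> y + D / k"
  shows "x \<le> y"
proof (rule ccontr)
  assume "\<not> x \<le> y"
  then have xy: "x - y > 0" by simp
  obtain k :: nat where k: "real k > max 1 (D / (x - y))" using reals_Archimedean2 by blast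
  then have k1: "k \<ge> 1" by simp
  have "D / (x - y) < k" using k by simp
  then have "D < k * (x - y)" using xy by (simp add: field_simps)
  then have "D / k < x - y" using k1 by (simp add: field_simps)
  then show False using assms[of k] k1 by simp
qed

lemma squeeze_eq:
  fixes x y D :: real
  assumes "\<And>k. (k::nat) \<ge> 1 \<Longrightarrow> \<bar>x - y\<bar> \<le> D / k"
  shows "x = y"
proof -
  have "x \<le> y" by (rule squeeze_le[of x y D]) (use assms in fastforce)
  moreover have "y \<le> x" by (rule squeeze_le[of y x D]) (use assms in fastforce)
  ultimately show ?thesis by simp
qed


lemma a_vec: assumes "k \<ge> 1" shows "a k (real_vec v) = g v"
proof -
  have "flr (real k *\<^sub>R real_vec v) = int k *s v"
    by (simp add: vec_eq_iff real_vec_def) (metis floor_of_int of_int_mult of_int_of_nat_eq)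
  then show ?thesis using assms by (simp add: a_def homog)
qed

lemma L_vec: "L (real_vec v) = g v"
proof (rule squeeze_eq[of _ _ C])
  fix k :: nat assume "k \<ge> 1"
  then show "\<bar>L (real_vec v) - g v\<bar> \<le> C / k"
    using L_bound[of k "real_vec v"] a_vec[of k v] by (simp add: abs_minus_commute)
qed

lemma a_nonneg: "0 \<le> a k r" by (simp add: a_def nonneg)

lemma L_nonneg: "0 \<le> L r"
proof (rule squeeze_le[of _ _ C])
  fix k :: nat assume "k \<ge> 1"
  then show "0 \<le> L r + C / k" using L_bound[of k r] a_nonneg[of k r] by linarith
qed

lemma a_subadd: assumes "k \<ge> 1" shows "a k (r1 + r2) \<le> a k r1 + a k r2 + C / k"
proof -
  have "\<bar>g (flr (real k *\<^sub>R (r1 + r2))) - g (flr (real k *\<^sub>R r1) + flr (real k *\<^sub>R r2))\<bar> \<le> C * 1"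
  proof (rule gdiff)
    fix i
    show "\<bar>real_of_int (flr (real k *\<^sub>R (r1 + r2)) $ i) - real_of_int ((flr (real k *\<^sub>R r1) + flr (real k *\<^sub>R r2)) $ i)\<bar> \<le> 1"
      using floor_add_le1 by (simp add: distrib_left)
  qed
  then have "g (flr (real k *\<^sub>R (r1 + r2))) \<le> g (flr (real k *\<^sub>R r1)) + g (flr (real k *\<^sub>R r2)) + C"
    using subadd[of "flr (real k *\<^sub>R r1)" "flr (real k *\<^sub>R r2)"] by linarith
  then have "g (flr (real k *\<^sub>R (r1 + r2))) / k \<le> (g (flr (real k *\<^sub>R r1)) + g (flr (real k *\<^sub>R r2)) + C) / k"
    using assms by (intro divide_right_mono) auto
  then show ?thesis by (simp add: a_def add_divide_distrib)
qed

lemma L_subadd: "L (r1 + r2) \<le> L r1 + L r2"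
proof (rule squeeze_le[of _ _ "4 * C"])
  fix k :: nat assume k: "k \<ge> 1"
  show "L (r1 + r2) \<le> L r1 + L r2 + 4 * C / k"
    using L_bound[OF k, of r1] L_bound[OF k, of r2] L_bound[OF k, of "r1 + r2"] a_subadd[OF k, of r1 r2]
    by (simp add: abs_le_iff)
qed

lemma L_neg: "L (- r) = L r"
proof (rule squeeze_eq[of _ _ "3 * C"])
  fix k :: nat assume k: "k \<ge> 1"
  have "\<bar>g (flr (real k *\<^sub>R (- r))) - g (- flr (real k *\<^sub>R r))\<bar> \<le> C * 1"
  proof (rule gdiff)
    fix i
    show "\<bar>real_of_int (flr (real k *\<^sub>R (- r)) $ i) - real_of_int ((- flr (real k *\<^sub>R r)) $ i)\<bar> \<le> 1"
      using floor_neg_le1 by simp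
  qed
  then have "\<bar>g (flr (real k *\<^sub>R (- r))) - g (flr (real k *\<^sub>R r))\<bar> / k \<le> C / k"
    using k by (intro divide_right_mono) (auto simp: gneg)
  then have "\<bar>a k (- r) - a k r\<bar> \<le> C / k"
    by (simp add: a_def abs_div_pos diff_divide_distrib[symmetric])
  then show "\<bar>L (- r) - L r\<bar> \<le> 3 * C / k"
    using L_bound[OF k, of r] L_bound[OF k, of "-r"] by (simp add: abs_le_iff)
qed


lemma a_upper: assumes k: "k \<ge> 1" shows "a k x \<le> C * norm x + C / k"
proof -
  have "g (flr (real k *\<^sub>R x)) \<le> C * (real k * norm x + 1)"
  proof (rule gbound)
    fix i
    have "\<bar>x$i\<bar> \<le> norm x" by (rule component_le_norm_cart)
    then have "\<bar>real k * x$i\<bar> \<le> real k * norm x" by (simp add: abs_mult mult_left_mono)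
    then show "real_of_int \<bar>flr (real k *\<^sub>R x) $ i\<bar> \<le> real k * norm x + 1"
      apply (simp add: abs_le_iff)
      using fl_bounds[of "real k * x$i"] by linarith
  qed
  then have "g (flr (real k *\<^sub>R x)) / k \<le> C * (real k * norm x + 1) / k"
    using k by (intro divide_right_mono) auto
  also have "\<dots> = C * norm x + C / k" using k by (simp add: field_simps)
  finally show ?thesis by (simp add: a_def)
qed

lemma L_upper: "L x \<le> C * norm x"
proof (rule squeeze_le[of _ _ "2 * C"])
  fix k :: nat assume k: "k \<ge> 1"
  show "L x \<le> C * norm x + 2 * C / k"
    using L_bound[OF k, of x] a_upper[OF k, of x] by (simp add: abs_le_iff)
qed

lemma L_lipschitz: "dist (L x) (L y) \<le> C * dist x y"
proof -
  have "L x \<le> L y + L (x - y)" using L_subadd[of y "x - y"] by simp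
  moreover have "L y \<le> L x + L (y - x)" using L_subadd[of x "y - x"] by simp
  moreover have "L (x - y) \<le> C * dist x y" using L_upper by (simp add: dist_norm)
  moreover have "L (y - x) \<le> C * dist x y" using L_upper[of "y - x"] dist_commute[of x y] by (simp add: dist_norm)
  ultimately show ?thesis by (simp add: dist_real_def abs_le_iff)
qed

lemma L_cont: "continuous_on UNIV L"
  by (rule lipschitz_on_continuous_on[of C]) (simp add: lipschitz_on_def C_nonneg L_lipschitz)

lemma L_scale_nonneg:
  assumes c: "c \<ge> 0" shows "L (c *\<^sub>R r) = c * L r"
proof (rule squeeze_eq[of _ _ "C * (norm r + 1) + C + L r + C"])
  fix k :: nat assume k: "k \<ge> 1"
  define m where "m = nat \<lfloor>real k * c\<rfloor>"
  have kc: "real_of_int \<lfloor>real k * c\<rfloor> \<ge> 0" using c by simp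
  have m: "real m = real_of_int \<lfloor>real k * c\<rfloor>" unfolding m_def using kc by simp
  have mk: "real m \<le> real k * c" "real k * c < real m + 1" using m fl_bounds[of "real k * c"] by auto
  have d1: "\<bar>g (flr (real k *\<^sub>R (c *\<^sub>R r))) - g (flr (real m *\<^sub>R r))\<bar> \<le> C * (norm r + 1)"
  proof (rule gdiff)
    fix i
    have "\<bar>r$i\<bar> \<le> norm r" by (rule component_le_norm_cart)
    have "\<bar>real k * (c * r$i) - real m * r$i\<bar> = \<bar>real k * c - real m\<bar> * \<bar>r$i\<bar>"
      by (simp add: algebra_simps flip: abs_mult)
    also have "\<dots> \<le> 1 * \<bar>r$i\<bar>" using mk by (intro mult_right_mono) auto
    finally have "\<bar>real k * c * r$i - real m * r$i\<bar> \<le> norm r" using \<open>\<bar>r$i\<bar> \<le> norm r\<close> by (simp add: mult.assoc)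
    then show "\<bar>real_of_int (flr (real k *\<^sub>R (c *\<^sub>R r)) $ i) - real_of_int (flr (real m *\<^sub>R r) $ i)\<bar> \<le> norm r + 1"
      apply (simp add: abs_le_iff mult.assoc[symmetric])
      using fl_bounds[of "real k * c * r$i"] fl_bounds[of "real m * r$i"] by linarith
  qed
  have d2: "\<bar>g (flr (real m *\<^sub>R r)) - real m * L r\<bar> \<le> C"
  proof (cases "m = 0")
    case True
    then have "flr (real m *\<^sub>R r) = 0" by (simp add: vec_eq_iff)
    then show ?thesis using True g0 C_nonneg by simp
  next
    case False
    then have m1: "m \<ge> 1" by simp
    have "g (flr (real m *\<^sub>R r)) = real m * a m r" using m1 by (simp add: a_def)
    then have "\<bar>g (flr (real m *\<^sub>R r)) - real m * L r\<bar> = real m * \<bar>a m r - L r\<bar>"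
      by (simp add: abs_mult flip: right_diff_distrib)
    also have "\<dots> \<le> real m * (C / m)" using L_bound[OF m1, of r] by (intro mult_left_mono) auto
    also have "\<dots> = C" using m1 by simp
    finally show ?thesis .
  qed
  have d3: "\<bar>real m * L r - real k * c * L r\<bar> \<le> L r"
  proof -
    have "\<bar>real m * L r - real k * c * L r\<bar> = \<bar>real m - real k * c\<bar> * L r"
      using L_nonneg[of r] by (simp add: abs_mult flip: left_diff_distrib)
    also have "\<dots> \<le> 1 * L r" using mk L_nonneg[of r] by (intro mult_right_mono) auto
    finally show ?thesis by simp
  qed
  have "\<bar>g (flr (real k *\<^sub>R (c *\<^sub>R r))) - real k * c * L r\<bar> \<le> C * (norm r + 1) + C + L r"
    using d1 d2 d3 by (simp add: abs_le_iff)
  then have "\<bar>g (flr (real k *\<^sub>R (c *\<^sub>R r))) - real k * c * L r\<bar> / k \<le> (C * (norm r + 1) + C + L r) / k"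
    using k by (intro divide_right_mono) auto
  moreover have "\<bar>g (flr (real k *\<^sub>R (c *\<^sub>R r))) - real k * c * L r\<bar> / k = \<bar>a k (c *\<^sub>R r) - c * L r\<bar>"
    using k by (simp add: a_def field_simps abs_div_pos[symmetric])
  ultimately have "\<bar>a k (c *\<^sub>R r) - c * L r\<bar> \<le> (C * (norm r + 1) + C + L r) / k" by simp
  then show "\<bar>L (c *\<^sub>R r) - c * L r\<bar> \<le> (C * (norm r + 1) + C + L r + C) / k"
    using L_bound[OF k, of "c *\<^sub>R r"] by (simp add: abs_le_iff add_divide_distrib)
qed

lemma L_scale: "L (c *\<^sub>R r) = \<bar>c\<bar> * L r"
proof (cases "c \<ge> 0")
  case True then show ?thesis using L_scale_nonneg by simp
next
  case False
  then have "c *\<^sub>R r = - ((- c) *\<^sub>R r)" by simp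
  then have "L (c *\<^sub>R r) = L ((- c) *\<^sub>R r)" using L_neg by metis
  then show ?thesis using False L_scale_nonneg[of "- c" r] by simp
qed


definition "MA = (\<Sum>i\<in>UNIV. \<Sum>j\<in>UNIV. \<bar>real_of_int (A$i$j)\<bar>)"

lemma L_ainv: "L (real_mat A *v r) = L r"
proof (rule squeeze_eq[of _ _ "C * (MA + 1) + 2 * C"])
  fix k :: nat assume k: "k \<ge> 1"
  have "\<bar>g (flr (real k *\<^sub>R (real_mat A *v r))) - g (A *v flr (real k *\<^sub>R r))\<bar> \<le> C * (MA + 1)"
  proof (rule gdiff)
    fix i
    let ?t = "real k * (\<Sum>j\<in>UNIV. real_of_int (A$i$j) * r$j)"
    have e1: "(flr (real k *\<^sub>R (real_mat A *v r))) $ i = \<lfloor>?t\<rfloor>"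
      by (simp add: matrix_vector_mult_def real_mat_def)
    have e2: "real_of_int ((A *v flr (real k *\<^sub>R r)) $ i) = (\<Sum>j\<in>UNIV. real_of_int (A$i$j) * real_of_int \<lfloor>real k * r$j\<rfloor>)"
      by (simp add: matrix_vector_mult_def)
    have "?t - (\<Sum>j\<in>UNIV. real_of_int (A$i$j) * real_of_int \<lfloor>real k * r$j\<rfloor>)
       = (\<Sum>j\<in>UNIV. real_of_int (A$i$j) * (real k * r$j - real_of_int \<lfloor>real k * r$j\<rfloor>))"
      by (simp add: sum_distrib_left sum_subtractf[symmetric] algebra_simps)
    also have "\<bar>\<dots>\<bar> \<le> (\<Sum>j\<in>UNIV. \<bar>real_of_int (A$i$j) * (real k * r$j - real_of_int \<lfloor>real k * r$j\<rfloor>)\<bar>)"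
      by (rule sum_abs)
    also have "\<dots> \<le> (\<Sum>j\<in>UNIV. \<bar>real_of_int (A$i$j)\<bar>)"
    proof (rule sum_mono)
      fix j
      have "\<bar>real k * r$j - real_of_int \<lfloor>real k * r$j\<rfloor>\<bar> \<le> 1"
        using fl_bounds[of "real k * r$j"] by linarith
      then show "\<bar>real_of_int (A$i$j) * (real k * r$j - real_of_int \<lfloor>real k * r$j\<rfloor>)\<bar> \<le> \<bar>real_of_int (A$i$j)\<bar>"
        by (simp add: abs_mult mult_left_le)
    qed
    also have "\<dots> \<le> MA"
      unfolding MA_def by (rule member_le_sum) (auto intro: sum_nonneg)
    finally have "\<bar>?t - (\<Sum>j\<in>UNIV. real_of_int (A$i$j) * real_of_int \<lfloor>real k * r$j\<rfloor>)\<bar> \<le> MA" .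
    then show "\<bar>real_of_int (flr (real k *\<^sub>R (real_mat A *v r)) $ i) - real_of_int ((A *v flr (real k *\<^sub>R r)) $ i)\<bar> \<le> MA + 1"
      unfolding e1 e2 using fl_bounds[of ?t] by (simp add: abs_le_iff) linarith
  qed
  then have "\<bar>g (flr (real k *\<^sub>R (real_mat A *v r))) - g (flr (real k *\<^sub>R r))\<bar> / k \<le> C * (MA + 1) / k"
    using k by (intro divide_right_mono) (auto simp: ainv)
  then have "\<bar>a k (real_mat A *v r) - a k r\<bar> \<le> C * (MA + 1) / k"
    by (simp add: a_def abs_div_pos diff_divide_distrib[symmetric])
  then show "\<bar>L (real_mat A *v r) - L r\<bar> \<le> (C * (MA + 1) + 2 * C) / k"
    using L_bound[OF k, of r] L_bound[OF k, of "real_mat A *v r"] by (simp add: abs_le_iff add_divide_distrib)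
qed


end

theorem lemma6:
  fixes A :: "int^'n^'n" and l :: "(int^'n) \<times> int \<Rightarrow> real"
  assumes "invertible A"
    and "length_function (sdp A) l"
  shows "\<exists>L :: real^'n \<Rightarrow> real.
           continuous_on UNIV L \<and>
           (\<forall>r. 0 \<le> L r) \<and>
           (\<forall>v. L (real_vec v) = l (v, 0)) \<and>
           (\<forall>r1 r2. L (r1 + r2) \<le> L r1 + L r2) \<and>
           (\<forall>a r. L (a *\<^sub>R r) = \<bar>a\<bar> * L r) \<and>
           (\<forall>r. L (real_mat A *v r) = L r)"
proof -
  note lf = assms(2)[unfolded length_function_def sdp_carrier]
  interpret S: semin "\<lambda>v. l (v, 0)" A
  proof
    fix v w :: "int^'n" and k :: int
    show "0 \<le> l (v, 0)" using lf by blast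
    have "(v,0) \<otimes>\<^bsub>sdp A\<^esub> (w,0) = (w,0) \<otimes>\<^bsub>sdp A\<^esub> (v,0)"
      by (simp add: sdp_mult mat_ipow0 add.commute)
    then have "l ((v,0) \<otimes>\<^bsub>sdp A\<^esub> (w,0)) \<le> l (v,0) + l (w,0)" using lf by blast
    then show "l (v + w, 0) \<le> l (v, 0) + l (w, 0)" by (simp add: sdp_mult mat_ipow0)
    have "l ((v,0) [^]\<^bsub>sdp A\<^esub> k) = \<bar>real_of_int k\<bar> * l (v,0)" using lf by blast
    then show "l (k *s v, 0) = \<bar>real_of_int k\<bar> * l (v, 0)" by (simp add: sdp_intpow)
    have "l ((0,1) \<otimes>\<^bsub>sdp A\<^esub> (v,0) \<otimes>\<^bsub>sdp A\<^esub> inv\<^bsub>sdp A\<^esub> (0,1)) = l (v,0)" using lf by blast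
    then show "l (A *v v, 0) = l (v, 0)"
      by (simp add: sdp_inv1[OF assms(1)] sdp_mult mat_ipow1)
  qed
  show ?thesis
    by (rule exI[of _ S.L]) (simp add: S.L_cont S.L_nonneg S.L_vec S.L_subadd S.L_scale S.L_ainv)
qed

end
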